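(* Let $\mathcal{T}=[t_{i,j,k}]\in\mathrm{Sym}(2,3)$. If $\mathcal{T}$ has a best rank one approximation that is not symmetric, then $\mathcal{T}$ is a nonzero scalar multiple of the tensor $\mathcal{T}_\theta\in\mathrm{Sym}(2,3)$ with entries $t_{1,1,1}=\cos\theta$, $t_{1,1,2}=\sin\theta$, $t_{1,2,2}=-\cos\theta$, $t_{2,2,2}=-\sin\theta$ (the remaining entries determined by symmetry) for some $\theta\in[0,2\pi)$. Moreover, for $\mathcal{T}=\mathcal{T}_\theta$: for arbitrary $\mathbf{u},\mathbf{v}\in\mathrm{S}^1$ there is a vector $\mathbf{w}(\mathbf{u},\mathbf{v})\in\mathrm{S}^1$, uniquely determined by $\mathbf{u},\mathbf{v}$, such that $\mathbf{u}\otimes\mathbf{v}\otimes\mathbf{w}(\mathbf{u},\mathbf{v})$ is a best rank one approximation of $\mathcal{T}_\theta$; and $\mathcal{T}_\theta$ has exactly three (distinct) symmetric best rank one approximations.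
   Context: $\mathrm{Sym}(2,3)$ is the space of real tensors $[t_{i,j,k}]_{i,j,k=1}^2$ invariant under all permutations of indices. $\mathrm{S}^1$ is the unit circle in $\mathbb{R}^2$. Inner product $\langle\mathcal{S},\mathcal{T}\rangle=\sum s_{i,j,k}t_{i,j,k}$, norm $\|\mathcal{T}\|=\sqrt{\langle\mathcal{T},\mathcal{T}\rangle}$. A best rank one approximation of $\mathcal{T}$ is a tensor $a\,\mathbf{x}\otimes\mathbf{y}\otimes\mathbf{z}$ ($a\in\mathbb{R}$, $\mathbf{x},\mathbf{y},\mathbf{z}\in\mathrm{S}^1$) minimizing $\|\mathcal{T}-s\,\mathbf{x}'\otimes\mathbf{y}'\otimes\mathbf{z}'\|$ over $s\in\mathbb{R}$, $\mathbf{x}',\mathbf{y}',\mathbf{z}'\in\mathrm{S}^1$. It is symmetric if it is a symmetric tensor, i.e. of the form $b\,\mathbf{u}\otimes\mathbf{u}\otimes\mathbf{u}$. *)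

theory Defs
  imports "HOL-Analysis.Analysis"
begin

text \<open>Real 2x2x2 tensors are modelled as elements of real^2^2^2, entry t_{i,j,k} = T$i$j$k,
 with the index type 2 whose elements are 1 and 2.\<close>

type_synonym tensor3 = "real^2^2^2"

definition is_sym :: "tensor3 \<Rightarrow> bool" where
  "is_sym T \<longleftrightarrow> (\<forall>i j k.
      T$i$j$k = T$i$k$j \<and> T$i$j$k = T$j$i$k \<and> T$i$j$k = T$j$k$i \<and>
      T$i$j$k = T$k$i$j \<and> T$i$j$k = T$k$j$i)"

definition S1 :: "(real^2) set" where
  "S1 = {x. norm x = 1}"

definition outer3 :: "real^2 \<Rightarrow> real^2 \<Rightarrow> real^2 \<Rightarrow> tensor3" where
  "outer3 x y z = (\<chi> i j k. x$i * y$j * z$k)"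

definition tinner :: "tensor3 \<Rightarrow> tensor3 \<Rightarrow> real" where
  "tinner S T = (\<Sum>i\<in>UNIV. \<Sum>j\<in>UNIV. \<Sum>k\<in>UNIV. S$i$j$k * T$i$j$k)"

definition tnorm :: "tensor3 \<Rightarrow> real" where
  "tnorm T = sqrt (tinner T T)"

definition is_best_rank_one :: "tensor3 \<Rightarrow> tensor3 \<Rightarrow> bool" where
  "is_best_rank_one T B \<longleftrightarrow>
     (\<exists>a x y z. x \<in> S1 \<and> y \<in> S1 \<and> z \<in> S1 \<and> B = a *\<^sub>R outer3 x y z) \<and>
     (\<forall>s x' y' z'. x' \<in> S1 \<and> y' \<in> S1 \<and> z' \<in> S1 \<longrightarrow>
        tnorm (T - B) \<le> tnorm (T - s *\<^sub>R outer3 x' y' z'))"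

definition cnt2 :: "2 \<Rightarrow> 2 \<Rightarrow> 2 \<Rightarrow> nat" where
  "cnt2 i j k = (if i = 2 then 1 else 0) + (if j = 2 then 1 else 0) + (if k = 2 then 1 else 0)"

definition T_theta :: "real \<Rightarrow> tensor3" where
  "T_theta \<theta> = (\<chi> i j k.
     (if cnt2 i j k = 0 then cos \<theta>
      else if cnt2 i j k = 1 then sin \<theta>
      else if cnt2 i j k = 2 then - cos \<theta>
      else - sin \<theta>))"

end

theory Submission
  imports Defs
begin


lemma S1_iff: "x \<in> S1 \<longleftrightarrow> (x$1)^2 + (x$2)^2 = 1"
  by (simp add: S1_def norm_vec_def L2_set_def sum_2)

definition Fv :: "tensor3 \<Rightarrow> real^2 \<Rightarrow> real^2 \<Rightarrow> real^2 \<Rightarrow> real" where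
  "Fv T x y z = tinner T (outer3 x y z)"

lemma quad: "tinner (T - s *\<^sub>R outer3 x y z) (T - s *\<^sub>R outer3 x y z)
   = tinner T T - 2 * s * Fv T x y z + s^2 * (((x$1)^2 + (x$2)^2)*((y$1)^2 + (y$2)^2)*((z$1)^2 + (z$2)^2))"
  unfolding Fv_def tinner_def outer3_def by (simp add: sum_2 power2_eq_square algebra_simps)

lemma tinner_nonneg: "0 \<le> tinner T T"
  unfolding tinner_def by (intro sum_nonneg) auto

lemma F_scale: "tinner T (a *\<^sub>R outer3 x y z) = a * Fv T x y z"
  unfolding Fv_def tinner_def outer3_def by (simp add: sum_2 algebra_simps)

lemma quad1: "x \<in> S1 \<Longrightarrow> y \<in> S1 \<Longrightarrow> z \<in> S1 \<Longrightarrow>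
  tinner (T - s *\<^sub>R outer3 x y z) (T - s *\<^sub>R outer3 x y z) = tinner T T - 2 * s * Fv T x y z + s^2"
  using quad[of T s x y z] by (simp add: S1_iff)

lemma tnorm_le: "tnorm A \<le> tnorm B \<longleftrightarrow> tinner A A \<le> tinner B B"
  unfolding tnorm_def by simp

lemma best_iff: "is_best_rank_one T B \<longleftrightarrow> (\<exists>x y z. x\<in>S1 \<and> y\<in>S1 \<and> z\<in>S1 \<and>
   B = Fv T x y z *\<^sub>R outer3 x y z \<and>
   (\<forall>x' y' z'. x'\<in>S1 \<and> y'\<in>S1 \<and> z'\<in>S1 \<longrightarrow> \<bar>Fv T x' y' z'\<bar> \<le> \<bar>Fv T x y z\<bar>))"
proof
  assume H: "is_best_rank_one T B"
  then obtain a x y z where xyz: "x\<in>S1" "y\<in>S1" "z\<in>S1" and B: "B = a *\<^sub>R outer3 x y z"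
    unfolding is_best_rank_one_def by blast
  have le: "tinner T T - 2 * a * Fv T x y z + a^2 \<le> tinner T T - 2 * s * Fv T x' y' z' + s^2"
    if "x'\<in>S1" "y'\<in>S1" "z'\<in>S1" for s x' y' z'
    using H that xyz unfolding is_best_rank_one_def B tnorm_le
    by (metis quad1)
  from le[OF xyz, of "Fv T x y z"] have "(a - Fv T x y z)^2 \<le> 0"
    by (simp add: power2_eq_square algebra_simps)
  hence a: "a = Fv T x y z" by simp
  show "\<exists>x y z. x\<in>S1 \<and> y\<in>S1 \<and> z\<in>S1 \<and>
   B = Fv T x y z *\<^sub>R outer3 x y z \<and>
   (\<forall>x' y' z'. x'\<in>S1 \<and> y'\<in>S1 \<and> z'\<in>S1 \<longrightarrow> \<bar>Fv T x' y' z'\<bar> \<le> \<bar>Fv T x y z\<bar>)"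
  proof (intro exI conjI allI impI)
    fix x' y' z' assume "x'\<in>S1 \<and> y'\<in>S1 \<and> z'\<in>S1"
    with le[of x' y' z' "Fv T x' y' z'"] a have "(Fv T x' y' z')^2 \<le> (Fv T x y z)^2"
      by (simp add: power2_eq_square algebra_simps)
    thus "\<bar>Fv T x' y' z'\<bar> \<le> \<bar>Fv T x y z\<bar>" by (simp add: abs_le_square_iff)
  qed (use xyz B a in auto)
next
  assume "\<exists>x y z. x\<in>S1 \<and> y\<in>S1 \<and> z\<in>S1 \<and>
   B = Fv T x y z *\<^sub>R outer3 x y z \<and>
   (\<forall>x' y' z'. x'\<in>S1 \<and> y'\<in>S1 \<and> z'\<in>S1 \<longrightarrow> \<bar>Fv T x' y' z'\<bar> \<le> \<bar>Fv T x y z\<bar>)"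
  then obtain x y z where xyz: "x\<in>S1" "y\<in>S1" "z\<in>S1" and B: "B = Fv T x y z *\<^sub>R outer3 x y z"
    and M: "\<And>x' y' z'. x'\<in>S1 \<Longrightarrow> y'\<in>S1 \<Longrightarrow> z'\<in>S1 \<Longrightarrow> \<bar>Fv T x' y' z'\<bar> \<le> \<bar>Fv T x y z\<bar>"
    by blast
  show "is_best_rank_one T B"
    unfolding is_best_rank_one_def
  proof (intro conjI allI impI)
    show "\<exists>a x y z. x \<in> S1 \<and> y \<in> S1 \<and> z \<in> S1 \<and> B = a *\<^sub>R outer3 x y z"
      using xyz B by blast
    fix s x' y' z' assume H: "x' \<in> S1 \<and> y' \<in> S1 \<and> z' \<in> S1"
    have "(Fv T x' y' z')^2 \<le> (Fv T x y z)^2" using M H by (simp add: abs_le_square_iff)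
    moreover have "0 \<le> (s - Fv T x' y' z')^2" by simp
    ultimately have "tinner T T - 2 * Fv T x y z * Fv T x y z + (Fv T x y z)^2
        \<le> tinner T T - 2 * s * Fv T x' y' z' + s^2"
      by (simp add: power2_eq_square algebra_simps)
    thus "tnorm (T - B) \<le> tnorm (T - s *\<^sub>R outer3 x' y' z')"
      unfolding tnorm_le B using quad1[OF xyz] quad1 H by simp
  qed
qed

definition qf :: "real \<Rightarrow> real \<Rightarrow> real \<Rightarrow> real \<Rightarrow> real \<Rightarrow> real \<Rightarrow> real \<Rightarrow> real" where
  "qf a b d u1 u2 v1 v2 = a* u1* v1 + b* (u1* v2+u2* v1) + d* u2* v2"

lemma qf_diag_bound:
  assumes H: "\<forall>u1 u2 v1 v2. u1^2+u2^2=1 \<longrightarrow> v1^2+v2^2=1 \<longrightarrow> qf a b d u1 u2 v1 v2 \<le> M"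
  shows "qf a b d w1 w2 w1 w2 \<le> M * (w1^2+w2^2) \<and> - qf a b d w1 w2 w1 w2 \<le> M * (w1^2+w2^2)"
proof (cases "w1^2+w2^2 = 0")
  case True
  then have "w1 = 0" "w2 = 0" by (auto simp: sum_power2_eq_zero_iff)
  then show ?thesis by (simp add: qf_def)
next
  case False
  define n where "n = sqrt (w1^2+w2^2)"
  have "0 < w1^2+w2^2" using False by (metis add_nonneg_nonneg zero_le_power2 less_eq_real_def)
  hence np: "n > 0" using n_def by simp
  have n2: "n^2 = w1^2+w2^2" unfolding n_def by simp
  have u: "(w1/n)^2 + (w2/n)^2 = 1" using np n2 False by (simp add: power_divide add_divide_distrib[symmetric])
  have u': "(-w1/n)^2 + (-w2/n)^2 = 1" using u by (simp add: power_divide)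
  have e1: "qf a b d (w1/n) (w2/n) (w1/n) (w2/n) = qf a b d w1 w2 w1 w2 / n^2"
    using np unfolding qf_def by (simp add: power2_eq_square field_simps)
  have e2: "qf a b d (w1/n) (w2/n) (-w1/n) (-w2/n) = - qf a b d w1 w2 w1 w2 / n^2"
    using np unfolding qf_def by (simp add: power2_eq_square field_simps)
  from H u have "qf a b d w1 w2 w1 w2 / n^2 \<le> M" using e1 by metis
  hence A: "qf a b d w1 w2 w1 w2 \<le> M * n^2" using np by (simp add: divide_le_eq)
  from H u u' have "- qf a b d w1 w2 w1 w2 / n^2 \<le> M" using e2 by metis
  hence "(- qf a b d w1 w2 w1 w2) / n^2 \<le> M" by simp
  hence B: "- qf a b d w1 w2 w1 w2 \<le> M * n^2" using pos_divide_le_eq[of "n^2" "- qf a b d w1 w2 w1 w2" M] np by simp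
  show ?thesis using A B n2 by simp
qed

lemma lemA:
  assumes H: "\<forall>u1 u2 v1 v2. u1^2+u2^2=1 \<longrightarrow> v1^2+v2^2=1 \<longrightarrow> qf a b d u1 u2 v1 v2 \<le> qf a b d x1 x2 y1 y2"
    and x: "x1^2+x2^2=1" and y: "y1^2+y2^2=1"
    and n1: "\<not>(x1=y1 \<and> x2=y2)" and n2: "\<not>(x1 = -y1 \<and> x2 = -y2)"
  shows "a + d = 0"
proof -
  define M where "M = qf a b d x1 x2 y1 y2"
  define s1 where "s1 = x1+y1"
  define s2 where "s2 = x2+y2"
  define e1 where "e1 = x1-y1"
  define e2 where "e2 = x2-y2"
  define S where "S = s1^2+s2^2"
  define E where "E = e1^2+e2^2"
  have HM: "\<forall>u1 u2 v1 v2. u1^2+u2^2=1 \<longrightarrow> v1^2+v2^2=1 \<longrightarrow> qf a b d u1 u2 v1 v2 \<le> M"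
    using H M_def by simp
  have bs: "qf a b d s1 s2 s1 s2 \<le> M * S" using qf_diag_bound[OF HM, of s1 s2] S_def by simp
  have be: "- qf a b d e1 e2 e1 e2 \<le> M * E" using qf_diag_bound[OF HM, of e1 e2] E_def by simp
  have SE: "S + E = 4" unfolding S_def E_def s1_def s2_def e1_def e2_def using x y
    by (simp add: power2_eq_square algebra_simps)
  have orth: "s1* e1+s2* e2 = 0" unfolding s1_def s2_def e1_def e2_def using x y
    by (simp add: power2_eq_square algebra_simps)
  have id4: "qf a b d s1 s2 s1 s2 - qf a b d e1 e2 e1 e2 = 4 * M"
    unfolding M_def qf_def s1_def s2_def e1_def e2_def by (simp add: algebra_simps)
  have eqs: "qf a b d s1 s2 s1 s2 = M * S" and eqe: "qf a b d e1 e2 e1 e2 = - M * E"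
  proof -
    have "M * S + M * E = 4 * M" using SE by (metis distrib_left mult.commute)
    thus "qf a b d s1 s2 s1 s2 = M * S" "qf a b d e1 e2 e1 e2 = - M * E" using bs be id4 by linarith+
  qed
  have Sp: "S > 0"
  proof -
    have "\<not> (s1 = 0 \<and> s2 = 0)" using n2 unfolding s1_def s2_def by auto
    thus ?thesis unfolding S_def by (metis add_nonneg_nonneg sum_power2_eq_zero_iff zero_le_power2 less_eq_real_def)
  qed
  have Ep: "E > 0"
  proof -
    have "\<not> (e1 = 0 \<and> e2 = 0)" using n1 unfolding e1_def e2_def by auto
    thus ?thesis unfolding E_def by (metis add_nonneg_nonneg sum_power2_eq_zero_iff zero_le_power2 less_eq_real_def)
  qed
  have iden: "qf a b d s1 s2 s1 s2 * E + qf a b d e1 e2 e1 e2 * S - (a+d)* S* E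
      = (s1* e1+s2* e2) * (a* (s1* e1 - s2* e2) + 2* b* (s2* e1+s1* e2) + d* (s2* e2 - s1* e1))"
    unfolding qf_def S_def E_def by (simp add: power2_eq_square algebra_simps)
  have "qf a b d s1 s2 s1 s2 * E + qf a b d e1 e2 e1 e2 * S - (a+d)*S*E = 0"
    using iden orth by simp
  hence "M * S * E + (- M * E) * S - (a+d)*S*E = 0" using eqs eqe by simp
  hence "(a+d)*S*E = 0" by (simp add: algebra_simps)
  thus ?thesis using Sp Ep by simp
qed

definition Fc :: "real \<Rightarrow> real \<Rightarrow> real \<Rightarrow> real \<Rightarrow> real \<Rightarrow> real \<Rightarrow> real \<Rightarrow> real \<Rightarrow> real \<Rightarrow> real \<Rightarrow> real" where
  "Fc t0 t1 t2 t3 x1 x2 y1 y2 z1 z2 = t0 * x1 * y1 * z1 + t1 * (x1 * y1 * z2 + x1 * y2 * z1 + x2 * y1 * z1)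
     + t2 * (x1 * y2 * z2 + x2 * y1 * z2 + x2 * y2 * z1) + t3 * x2 * y2 * z2"

lemma Fc_qf: "Fc t0 t1 t2 t3 x1 x2 y1 y2 z1 z2 = qf (t0 * z1 + t1 * z2) (t1 * z1 + t2 * z2) (t2 * z1 + t3 * z2) x1 x2 y1 y2"
  unfolding Fc_def qf_def by (simp add: algebra_simps)

lemma Fc_swap23: "Fc t0 t1 t2 t3 x1 x2 y1 y2 z1 z2 = Fc t0 t1 t2 t3 x1 x2 z1 z2 y1 y2"
  unfolding Fc_def by (simp add: algebra_simps)

lemma Fc_rot: "Fc t0 t1 t2 t3 x1 x2 y1 y2 z1 z2 = Fc t0 t1 t2 t3 y1 y2 z1 z2 x1 x2"
  unfolding Fc_def by (simp add: algebra_simps)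

lemma cs2: "((p1::real) * A + p2 * B)^2 \<le> (p1^2 + p2^2) * (A^2 + B^2)"
proof -
  have "(p1 * A + p2 * B)^2 + (p1 * B - p2 * A)^2 = (p1^2 + p2^2) * (A^2 + B^2)"
    by (simp add: power2_eq_square algebra_simps)
  thus ?thesis by (metis le_add_same_cancel1 zero_le_power2)
qed

lemma lemP1:
  assumes Hmax: "\<forall>u1 u2 v1 v2 w1 w2. u1^2+u2^2=1 \<longrightarrow> v1^2+v2^2=1 \<longrightarrow> w1^2+w2^2=1 \<longrightarrow>
      Fc t0 t1 t2 t3 u1 u2 v1 v2 w1 w2 \<le> M"
    and p: "p1^2+p2^2=1" and q: "q1^2+q2^2=1" and r: "r1^2+r2^2=1"
    and FM: "Fc t0 t1 t2 t3 p1 p2 q1 q2 r1 r2 = M" and Mp: "M > 0"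
    and n1: "\<not>(p1=q1 \<and> p2=q2)" and n2: "\<not>(p1 = -q1 \<and> p2 = -q2)"
  shows "t0 + t2 = 0 \<and> t1 + t3 = 0"
proof -
  have tr: "(t0 * r1 + t1 * r2) + (t2 * r1 + t3 * r2) = 0"
  proof (rule lemA[OF _ p q n1 n2])
    show "\<forall>u1 u2 v1 v2. u1\<^sup>2 + u2\<^sup>2 = 1 \<longrightarrow> v1\<^sup>2 + v2\<^sup>2 = 1 \<longrightarrow>
      qf (t0 * r1 + t1 * r2) (t1 * r1 + t2 * r2) (t2 * r1 + t3 * r2) u1 u2 v1 v2
      \<le> qf (t0 * r1 + t1 * r2) (t1 * r1 + t2 * r2) (t2 * r1 + t3 * r2) p1 p2 q1 q2"
      using Hmax r FM by (auto simp: Fc_qf[symmetric])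
  qed
  define \<alpha> where "\<alpha> = t0 * r1 + t1 * r2"
  define \<beta> where "\<beta> = t1 * r1 + t2 * r2"
  have d: "t2 * r1 + t3 * r2 = - \<alpha>" using tr \<alpha>_def by linarith
  define \<rho> where "\<rho> = sqrt (\<alpha>^2 + \<beta>^2)"
  have \<rho>2: "\<rho>^2 = \<alpha>^2 + \<beta>^2" unfolding \<rho>_def by simp
  have \<rho>0: "\<rho> \<ge> 0" unfolding \<rho>_def by simp
  have Mr: "M \<le> \<rho>"
  proof -
    have "M = p1 * (\<alpha> * q1 + \<beta> * q2) + p2 * (\<beta> * q1 - \<alpha> * q2)"
      using FM unfolding Fc_qf d \<alpha>_def[symmetric] \<beta>_def[symmetric] qf_def by (simp add: algebra_simps)
    hence "M^2 \<le> (p1^2+p2^2) * ((\<alpha> * q1 + \<beta> * q2)^2 + (\<beta> * q1 - \<alpha> * q2)^2)" using cs2 by metis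
    also have "\<dots> = (\<alpha>^2 + \<beta>^2) * (q1^2+q2^2)" using p by (simp add: power2_eq_square algebra_simps)
    finally have "M^2 \<le> \<rho>^2" using q \<rho>2 by simp
    thus ?thesis using \<rho>0 by (simp add: power2_le_iff_abs_le)
  qed
  have \<rho>p: "\<rho> > 0" using Mr Mp by linarith
  define g1 where "g1 = \<alpha> * r1 + \<beta> * r2"
  define g2 where "g2 = \<beta> * r1 - \<alpha> * r2"
  have C: "(t0+t2) * y1 + (t1+t3) * y2 = 0"
    if y: "y1^2+y2^2=1" and ny1: "\<not>(y1 = g1/\<rho> \<and> y2 = g2/\<rho>)" and ny2: "\<not>(y1 = -g1/\<rho> \<and> y2 = -g2/\<rho>)"
    for y1 y2
  proof -
    define x1 where "x1 = (\<alpha> * y1 + \<beta> * y2)/\<rho>"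
    define x2 where "x2 = (\<beta> * y1 - \<alpha> * y2)/\<rho>"
    have x: "x1^2+x2^2 = 1"
    proof -
      have "x1^2+x2^2 = ((\<alpha>^2 + \<beta>^2) * (y1^2+y2^2))/\<rho>^2"
        unfolding x1_def x2_def by (simp add: power_divide add_divide_distrib[symmetric] power2_eq_square algebra_simps)
      moreover have "\<not>(\<alpha> = 0 \<and> \<beta> = 0)" using \<rho>2 \<rho>p by auto
      ultimately show ?thesis using y \<rho>2 \<rho>p by simp
    qed
    have "Fc t0 t1 t2 t3 x1 x2 y1 y2 r1 r2 = x1 * (\<alpha> * y1 + \<beta> * y2) + x2 * (\<beta> * y1 - \<alpha> * y2)"
      unfolding Fc_qf d \<alpha>_def[symmetric] \<beta>_def[symmetric] qf_def by (simp add: algebra_simps)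
    also have "\<dots> = ((\<alpha> * y1 + \<beta> * y2)^2 + (\<beta> * y1 - \<alpha> * y2)^2) / \<rho>"
      unfolding x1_def x2_def using \<rho>p by (simp add: power2_eq_square field_simps)
    also have "\<dots> = ((\<alpha>^2 + \<beta>^2) * (y1^2+y2^2)) / \<rho>"
      by (simp add: power2_eq_square algebra_simps)
    also have "\<dots> = (\<rho> * \<rho>) / \<rho>" using y \<rho>2 by (simp add: power2_eq_square)
    also have "\<dots> = \<rho>" using \<rho>p by simp
    finally have Fx: "Fc t0 t1 t2 t3 x1 x2 y1 y2 r1 r2 = \<rho>" .
    have "Fc t0 t1 t2 t3 x1 x2 y1 y2 r1 r2 \<le> M" using Hmax x y r by blast
    hence FxM: "Fc t0 t1 t2 t3 x1 x2 r1 r2 y1 y2 = M"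
      using Fx Mr Fc_swap23[of t0 t1 t2 t3 x1 x2 y1 y2 r1 r2] by linarith
    have gx1: "\<alpha> * x1 + \<beta> * x2 = \<rho> * y1"
    proof -
      have "\<alpha> * x1 + \<beta> * x2 = (\<alpha> * (\<alpha> * y1 + \<beta> * y2) + \<beta> * (\<beta> * y1 - \<alpha> * y2)) / \<rho>"
        unfolding x1_def x2_def by (simp add: add_divide_distrib distrib_left)
      also have "\<dots> = (\<rho>^2 * y1) / \<rho>" using \<rho>2 by (simp add: power2_eq_square algebra_simps)
      also have "\<dots> = \<rho> * y1" using \<rho>p by (simp add: power2_eq_square)
      finally show ?thesis .
    qed
    have gx2: "\<beta> * x1 - \<alpha> * x2 = \<rho> * y2"
    proof -
      have "\<beta> * x1 - \<alpha> * x2 = (\<beta> * (\<alpha> * y1 + \<beta> * y2) - \<alpha> * (\<beta> * y1 - \<alpha> * y2)) / \<rho>"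
        unfolding x1_def x2_def by (simp add: diff_divide_distrib right_diff_distrib)
      also have "\<dots> = (\<rho>^2 * y2) / \<rho>" using \<rho>2 by (simp add: power2_eq_square algebra_simps)
      also have "\<dots> = \<rho> * y2" using \<rho>p by (simp add: power2_eq_square)
      finally show ?thesis .
    qed
    have nx1: "\<not>(x1 = r1 \<and> x2 = r2)"
    proof
      assume e: "x1 = r1 \<and> x2 = r2"
      hence "g1 = \<rho> * y1" "g2 = \<rho> * y2" using gx1 gx2 g1_def g2_def by auto
      thus False using ny1 \<rho>p by simp
    qed
    have nx2: "\<not>(x1 = -r1 \<and> x2 = -r2)"
    proof
      assume e: "x1 = -r1 \<and> x2 = -r2"
      hence "g1 = - \<rho> * y1" "g2 = - \<rho> * y2" using gx1 gx2 g1_def g2_def by (auto simp: algebra_simps)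
      thus False using ny2 \<rho>p by (simp add: minus_divide_left)
    qed
    have "(t0 * y1 + t1 * y2) + (t2 * y1 + t3 * y2) = 0"
    proof (rule lemA[OF _ x r nx1 nx2])
      show "\<forall>u1 u2 v1 v2. u1\<^sup>2 + u2\<^sup>2 = 1 \<longrightarrow> v1\<^sup>2 + v2\<^sup>2 = 1 \<longrightarrow>
        qf (t0 * y1 + t1 * y2) (t1 * y1 + t2 * y2) (t2 * y1 + t3 * y2) u1 u2 v1 v2
        \<le> qf (t0 * y1 + t1 * y2) (t1 * y1 + t2 * y2) (t2 * y1 + t3 * y2) x1 x2 r1 r2"
        using Hmax y FxM by (auto simp: Fc_qf[symmetric])
    qed
    thus ?thesis by (simp add: algebra_simps)
  qed
  have A1: "t0 + t2 = 0" if "\<not>(1 = g1/\<rho> \<and> 0 = g2/\<rho>)" "\<not>(1 = -g1/\<rho> \<and> 0 = -g2/\<rho>)"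
    using C[of 1 0] that by simp
  have A2: "t1 + t3 = 0" if "\<not>(0 = g1/\<rho> \<and> 1 = g2/\<rho>)" "\<not>(0 = -g1/\<rho> \<and> 1 = -g2/\<rho>)"
    using C[of 0 1] that by simp
  have A3: "(t0+t2) * 3 + (t1+t3) * 4 = 0" if "\<not>(3/5 = g1/\<rho> \<and> 4/5 = g2/\<rho>)" "\<not>(3/5 = -g1/\<rho> \<and> 4/5 = -g2/\<rho>)"
  proof -
    have "(t0+t2) * (3/5) + (t1+t3) * (4/5) = 0" using C[of "3/5" "4/5"] that by (simp add: power2_eq_square)
    thus ?thesis by linarith
  qed
  show ?thesis
  proof (cases "(1 = g1/\<rho> \<and> 0 = g2/\<rho>) \<or> (1 = -g1/\<rho> \<and> 0 = -g2/\<rho>)")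
    case True
    then have "t1 + t3 = 0" "(t0+t2) * 3 + (t1+t3) * 4 = 0" using A2 A3 by (auto simp: minus_divide_left[symmetric])
    then show ?thesis by simp
  next
    case False
    then have a1: "t0 + t2 = 0" using A1 by blast
    show ?thesis
    proof (cases "(0 = g1/\<rho> \<and> 1 = g2/\<rho>) \<or> (0 = -g1/\<rho> \<and> 1 = -g2/\<rho>)")
      case True
      then have "(t0+t2) * 3 + (t1+t3) * 4 = 0" using A3 by (auto simp: minus_divide_left[symmetric])
      then show ?thesis using a1 by simp
    next
      case False
      then show ?thesis using a1 A2 by blast
    qed
  qed
qed

lemma sym_entries:
  assumes "is_sym T"
  shows "T$1$1$2 = T$1$1$2" "T$1$2$1 = T$1$1$2" "T$2$1$1 = T$1$1$2"
    "T$2$1$2 = T$1$2$2" "T$2$2$1 = T$1$2$2"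
  using assms unfolding is_sym_def by metis+

lemma Fv_sym:
  assumes "is_sym T"
  shows "Fv T x y z = Fc (T$1$1$1) (T$1$1$2) (T$1$2$2) (T$2$2$2) (x$1) (x$2) (y$1) (y$2) (z$1) (z$2)"
  using sym_entries[OF assms] unfolding Fv_def tinner_def outer3_def Fc_def
  by (simp add: sum_2 algebra_simps)

lemma Fv_scale3: "Fv T x y (c *\<^sub>R z) = c * Fv T x y z"
  unfolding Fv_def tinner_def outer3_def by (simp add: sum_2 algebra_simps)

lemma outer3_scale3: "a *\<^sub>R outer3 x y z = (a * c) *\<^sub>R outer3 x y (c *\<^sub>R z)" if "c * c = 1"
  using that unfolding outer3_def by (simp add: vec_eq_iff algebra_simps)

lemma sym_par:
  assumes "x = y \<or> x = -y" "z = y \<or> z = -y"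
  shows "is_sym (a *\<^sub>R outer3 x y z)"
  using assms unfolding is_sym_def outer3_def by (auto simp: algebra_simps)

lemma vec2_eq: "(x::real^2) = y \<longleftrightarrow> x$1 = y$1 \<and> x$2 = y$2"
  by (simp add: vec_eq_iff forall_2)

lemma cnt2_test: "cnt2 1 2 1 = 1" "cnt2 2 2 1 = 2" "cnt2 1 1 1 = 0" "cnt2 2 2 2 = 3"
  by (simp_all add: cnt2_def)

lemma part1:
  assumes sT: "is_sym T" and bB: "is_best_rank_one T B" and nsB: "\<not> is_sym B"
  shows "\<exists>c \<theta>. c \<noteq> 0 \<and> 0 \<le> \<theta> \<and> \<theta> < 2 * pi \<and> T = c *\<^sub>R T_theta \<theta>"
proof -
  obtain x y z where xyz: "x\<in>S1" "y\<in>S1" "z\<in>S1" and B: "B = Fv T x y z *\<^sub>R outer3 x y z"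
    and mx: "\<And>x' y' z'. x'\<in>S1 \<Longrightarrow> y'\<in>S1 \<Longrightarrow> z'\<in>S1 \<Longrightarrow> \<bar>Fv T x' y' z'\<bar> \<le> \<bar>Fv T x y z\<bar>"
    using bB unfolding best_iff by blast
  define t0 where "t0 = T$1$1$1"
  define t1 where "t1 = T$1$1$2"
  define t2 where "t2 = T$1$2$2"
  define t3 where "t3 = T$2$2$2"
  have FvF: "\<And>x y z. Fv T x y z = Fc t0 t1 t2 t3 (x$1) (x$2) (y$1) (y$2) (z$1) (z$2)"
    using Fv_sym[OF sT] t0_def t1_def t2_def t3_def by simp
  define M where "M = \<bar>Fv T x y z\<bar>"
  have F0: "Fv T x y z \<noteq> 0"
  proof
    assume "Fv T x y z = 0"
    hence "B = 0" using B by simp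
    moreover have "is_sym 0" unfolding is_sym_def by simp
    ultimately show False using nsB by simp
  qed
  hence Mp: "M > 0" unfolding M_def by simp
  define \<sigma> where "\<sigma> = sgn (Fv T x y z)"
  have \<sigma>\<sigma>: "\<sigma> * \<sigma> = 1" using F0 unfolding \<sigma>_def by (cases "Fv T x y z > 0") auto
  define z0 where "z0 = \<sigma> *\<^sub>R z"
  have z0: "z0 \<in> S1" using xyz(3) \<sigma>\<sigma> unfolding z0_def S1_iff
    by (simp add: power2_eq_square algebra_simps) (metis mult.assoc mult.commute distrib_left mult_1)
  have Fz0: "Fv T x y z0 = M" unfolding z0_def Fv_scale3 M_def \<sigma>_def by (simp add: sgn_if)
  have B0: "B = M *\<^sub>R outer3 x y z0"
    unfolding B z0_def using outer3_scale3[OF \<sigma>\<sigma>, of "Fv T x y z" x y z] \<sigma>_def M_def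
    by (simp add: sgn_if)
  have Hmax: "\<forall>u1 u2 v1 v2 w1 w2. u1^2+u2^2=1 \<longrightarrow> v1^2+v2^2=1 \<longrightarrow> w1^2+w2^2=1 \<longrightarrow>
      Fc t0 t1 t2 t3 u1 u2 v1 v2 w1 w2 \<le> M"
  proof (intro allI impI)
    fix u1 u2 v1 v2 w1 w2 :: real
    assume u: "u1^2+u2^2=1" and v: "v1^2+v2^2=1" and w: "w1^2+w2^2=1"
    have "vector [u1,u2] \<in> S1" "vector [v1,v2] \<in> S1" "(vector [w1,w2] :: real^2) \<in> S1"
      using u v w by (simp_all add: S1_iff)
    from mx[OF this] have "\<bar>Fv T (vector [u1,u2]) (vector [v1,v2]) (vector [w1,w2])\<bar> \<le> M"
      unfolding M_def .
    thus "Fc t0 t1 t2 t3 u1 u2 v1 v2 w1 w2 \<le> M" unfolding FvF by simp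
  qed
  have un: "\<And>v. v \<in> S1 \<Longrightarrow> (v$1)^2 + (v$2)^2 = 1" by (simp add: S1_iff)
  have np: "\<not>((x = y \<or> x = -y) \<and> (z0 = y \<or> z0 = -y))"
    using sym_par[of x y z0 M] nsB B0 by blast
  have tt: "t0 + t2 = 0 \<and> t1 + t3 = 0"
  proof (cases "x = y \<or> x = -y")
    case False
    show ?thesis
      by (rule lemP1[OF Hmax un[OF xyz(1)] un[OF xyz(2)] un[OF z0] _ Mp])
        (use False Fz0 FvF in \<open>auto simp: vec2_eq\<close>)
  next
    case True
    then have n: "\<not>(y = z0 \<or> y = -z0)" using np by (auto simp: vec2_eq)
    have r: "Fc t0 t1 t2 t3 (y$1) (y$2) (z0$1) (z0$2) (x$1) (x$2) = M"
      using Fz0 FvF Fc_rot[of t0 t1 t2 t3 "x$1" "x$2" "y$1" "y$2" "z0$1" "z0$2"] by simp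
    show ?thesis
      by (rule lemP1[OF Hmax un[OF xyz(2)] un[OF z0] un[OF xyz(1)] r Mp])
        (use n in \<open>auto simp: vec2_eq\<close>)
  qed
  define c where "c = sqrt (t0^2 + t1^2)"
  have cnz: "c \<noteq> 0"
  proof
    assume "c = 0"
    hence "t0 = 0" "t1 = 0" unfolding c_def by (auto simp: sum_power2_eq_zero_iff)
    hence "t2 = 0" "t3 = 0" using tt by auto
    hence "Fv T x y z0 = 0" using \<open>t0 = 0\<close> \<open>t1 = 0\<close> unfolding FvF Fc_def by simp
    thus False using Fz0 Mp by simp
  qed
  have c2: "c^2 = t0^2 + t1^2" unfolding c_def by simp
  have "(t0/c)^2 + (t1/c)^2 = 1" using c2 cnz by (metis power_not_zero add_divide_distrib power_divide divide_self)
  then obtain \<theta> where th: "0 \<le> \<theta>" "\<theta> < 2*pi" "t0/c = cos \<theta>" "t1/c = sin \<theta>"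
    using sincos_total_2pi by metis
  have ct: "t0 = c * cos \<theta>" "t1 = c * sin \<theta>" using th cnz by (auto simp: field_simps)
  have "T = c *\<^sub>R T_theta \<theta>"
    using sym_entries[OF sT] ct tt unfolding vec_eq_iff forall_2 T_theta_def t0_def t1_def t2_def t3_def
    by (simp add: cnt2_def)
  thus ?thesis using cnz th by blast
qed



definition cx :: "real^2 \<Rightarrow> complex" where "cx v = Complex (v$1) (v$2)"

lemma cmul: "Complex a b * Complex c d = Complex (a*c - b*d) (a*d + b*c)"
  by (simp add: complex_eq_iff)

lemma cnjcis: "cnj (cis t) = Complex (cos t) (- sin t)"
  by (simp add: complex_eq_iff)

lemma FT: "Fv (T_theta \<theta>) u v w = Re (cnj (cis \<theta>) * cx u * cx v * cx w)"
  unfolding Fv_def tinner_def outer3_def T_theta_def cx_def cnjcis cmul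
  apply (simp add: sum_2 cnt2_def)
  apply (simp add: algebra_simps)
  done
definition vc :: "complex \<Rightarrow> real^2" where "vc z = vector [Re z, Im z]"

lemma cx_vc [simp]: "cx (vc z) = z" by (simp add: cx_def vc_def complex_eq_iff)
lemma vc_cx [simp]: "vc (cx v) = v" by (simp add: cx_def vc_def vec2_eq)
lemma cx_inj: "cx v = cx w \<Longrightarrow> v = w" by (metis vc_cx)

lemma S1_cx: "v \<in> S1 \<longleftrightarrow> cmod (cx v) = 1"
  by (simp add: S1_iff cx_def cmod_def)

lemma cmod4: "u \<in> S1 \<Longrightarrow> v \<in> S1 \<Longrightarrow> w \<in> S1 \<Longrightarrow> cmod (cnj (cis \<theta>) * cx u * cx v * cx w) = 1"
  unfolding S1_cx by (simp add: norm_mult)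

lemma FT_bound: "u \<in> S1 \<Longrightarrow> v \<in> S1 \<Longrightarrow> w \<in> S1 \<Longrightarrow> \<bar>Fv (T_theta \<theta>) u v w\<bar> \<le> 1"
  unfolding FT using abs_Re_le_cmod cmod4 by metis

lemma re1: "cmod z = 1 \<Longrightarrow> Re z = 1 \<Longrightarrow> z = 1"
proof -
  assume a: "cmod z = 1" "Re z = 1"
  have "(Re z)^2 + (Im z)^2 = 1" using a(1) by (simp add: cmod_def)
  hence "Im z = 0" using a(2) by simp
  thus ?thesis using a(2) by (simp add: complex_eq_iff)
qed

lemma FT_one: "u \<in> S1 \<Longrightarrow> v \<in> S1 \<Longrightarrow> w \<in> S1 \<Longrightarrow>
   Fv (T_theta \<theta>) u v w = 1 \<longleftrightarrow> cnj (cis \<theta>) * cx u * cx v * cx w = 1"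
  unfolding FT using re1 cmod4 by fastforce

lemma cnj_self1: "cmod a = 1 \<Longrightarrow> a * cnj a = 1"
  using complex_norm_square[of a] by simp

lemma FT_exists: assumes "u \<in> S1" "v \<in> S1" shows "\<exists>w. w \<in> S1 \<and> Fv (T_theta \<theta>) u v w = 1"
proof -
  define z where "z = cis \<theta> * cnj (cx u) * cnj (cx v)"
  have cu: "cmod (cx u) = 1" and cv: "cmod (cx v) = 1" using assms by (simp_all add: S1_cx)
  have cz: "cmod z = 1" using cu cv unfolding z_def by (simp add: norm_mult)
  have "cnj (cis \<theta>) * cx u * cx v * z = (cis \<theta> * cnj (cis \<theta>)) * (cx u * cnj (cx u)) * (cx v * cnj (cx v))"
    unfolding z_def by (simp add: algebra_simps)
  also have "\<dots> = 1" using cu cv by (simp add: cnj_self1)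
  finally have "cnj (cis \<theta>) * cx u * cx v * cx (vc z) = 1" by simp
  moreover have "vc z \<in> S1" using cz by (simp add: S1_cx)
  ultimately show ?thesis using FT_one assms by blast
qed

lemma FT_one_best: assumes "u \<in> S1" "v \<in> S1" "w \<in> S1" "Fv (T_theta \<theta>) u v w = 1"
  shows "is_best_rank_one (T_theta \<theta>) (outer3 u v w)"
  unfolding best_iff using assms FT_bound by (intro exI[of _ u] exI[of _ v] exI[of _ w]) auto

lemma best_T: assumes "is_best_rank_one (T_theta \<theta>) B"
  obtains x y z where "x\<in>S1" "y\<in>S1" "z\<in>S1" "B = Fv (T_theta \<theta>) x y z *\<^sub>R outer3 x y z"
    "\<bar>Fv (T_theta \<theta>) x y z\<bar> = 1" "tinner (T_theta \<theta>) B = 1"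
proof -
  obtain x y z where xyz: "x\<in>S1" "y\<in>S1" "z\<in>S1" and B: "B = Fv (T_theta \<theta>) x y z *\<^sub>R outer3 x y z"
    and mx: "\<And>x' y' z'. x'\<in>S1 \<Longrightarrow> y'\<in>S1 \<Longrightarrow> z'\<in>S1 \<Longrightarrow> \<bar>Fv (T_theta \<theta>) x' y' z'\<bar> \<le> \<bar>Fv (T_theta \<theta>) x y z\<bar>"
    using assms unfolding best_iff by blast
  obtain w where w: "w \<in> S1" "Fv (T_theta \<theta>) x x w = 1" using FT_exists xyz(1) by blast
  have "1 \<le> \<bar>Fv (T_theta \<theta>) x y z\<bar>" using mx[OF xyz(1) xyz(1) w(1)] w(2) by simp
  hence a: "\<bar>Fv (T_theta \<theta>) x y z\<bar> = 1" using FT_bound[OF xyz, of \<theta>] by linarith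
  have "tinner (T_theta \<theta>) B = Fv (T_theta \<theta>) x y z * Fv (T_theta \<theta>) x y z"
    unfolding B F_scale Fv_def ..
  also have "\<dots> = 1" using a by (metis abs_mult_self_eq mult_1)
  finally show ?thesis using that xyz B a by blast
qed

lemma best_outer_iff: assumes "u \<in> S1" "v \<in> S1" "w \<in> S1"
  shows "is_best_rank_one (T_theta \<theta>) (outer3 u v w) \<longleftrightarrow> Fv (T_theta \<theta>) u v w = 1"
proof
  assume "is_best_rank_one (T_theta \<theta>) (outer3 u v w)"
  then obtain x y z where "tinner (T_theta \<theta>) (outer3 u v w) = 1" using best_T by blast
  thus "Fv (T_theta \<theta>) u v w = 1" unfolding Fv_def .
qed (use FT_one_best assms in blast)

lemma part2a: assumes "u \<in> S1" "v \<in> S1"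
  shows "\<exists>!w. w \<in> S1 \<and> is_best_rank_one (T_theta \<theta>) (outer3 u v w)"
proof -
  obtain w where w: "w \<in> S1" "Fv (T_theta \<theta>) u v w = 1" using FT_exists assms by blast
  show ?thesis
  proof (rule ex1I[of _ w])
    show "w \<in> S1 \<and> is_best_rank_one (T_theta \<theta>) (outer3 u v w)" using w assms best_outer_iff by blast
    fix w' assume "w' \<in> S1 \<and> is_best_rank_one (T_theta \<theta>) (outer3 u v w')"
    hence w': "w' \<in> S1" "Fv (T_theta \<theta>) u v w' = 1" using assms best_outer_iff by blast+
    have e1: "cnj (cis \<theta>) * cx u * cx v * cx w = 1" using FT_one assms w by blast
    have e2: "cnj (cis \<theta>) * cx u * cx v * cx w' = 1" using FT_one assms w' by blast
    have nz: "cnj (cis \<theta>) * cx u * cx v \<noteq> 0" using e1 by auto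
    from e1 e2 have "cnj (cis \<theta>) * cx u * cx v * cx w' = cnj (cis \<theta>) * cx u * cx v * cx w" by simp
    hence "cx w' = cx w" using nz by simp
    thus "w' = w" by (rule cx_inj)
  qed
qed

lemma par: fixes x y :: "real^2" assumes "(x$1)^2 + (x$2)^2 = 1" "(y$1)^2 + (y$2)^2 = 1" "x$1 * y$2 = x$2 * y$1"
  shows "x = y \<or> x = -y"
proof -
  define d where "d = x$1 * y$1 + x$2 * y$2"
  have "d^2 = ((x$1)^2 + (x$2)^2) * ((y$1)^2 + (y$2)^2) - (x$1 * y$2 - x$2 * y$1)^2"
    unfolding d_def by (simp add: power2_eq_square algebra_simps)
  hence "d^2 = 1" using assms by simp
  hence "d = 1 \<or> d = -1" by (simp add: power2_eq_1_iff)
  thus ?thesis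
  proof
    assume "d = 1"
    hence "(x$1 - y$1)^2 + (x$2 - y$2)^2 = 0" using assms unfolding d_def by (simp add: power2_eq_square algebra_simps)
    thus ?thesis by (simp add: vec2_eq sum_power2_eq_zero_iff)
  next
    assume "d = -1"
    hence "(x$1 + y$1)^2 + (x$2 + y$2)^2 = 0" using assms unfolding d_def by (simp add: power2_eq_square algebra_simps)
    hence "x$1 + y$1 = 0 \<and> x$2 + y$2 = 0" by (simp only: sum_power2_eq_zero_iff)
    hence "x$1 = - y$1" "x$2 = - y$2" by linarith+
    thus ?thesis by (simp add: vec2_eq)
  qed
qed

lemma nz_coord: "(z::real^2) \<in> S1 \<Longrightarrow> z$1 \<noteq> 0 \<or> z$2 \<noteq> 0"
  by (auto simp: S1_iff)

lemma pm1: "(s::real) * s = 1 \<Longrightarrow> s = 1 \<or> s = -1"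
proof -
  assume "s * s = 1"
  hence "s^2 = 1" by (simp add: power2_eq_square)
  thus ?thesis by (simp add: power2_eq_1_iff)
qed

lemma outer3_s: "s = 1 \<or> s = -1 \<Longrightarrow> s *\<^sub>R outer3 z z z = outer3 (s *\<^sub>R z) (s *\<^sub>R z) (s *\<^sub>R z)"
  unfolding outer3_def by (auto simp: vec_eq_iff)

lemma S1_scale: "s = 1 \<or> s = -1 \<Longrightarrow> z \<in> S1 \<Longrightarrow> s *\<^sub>R z \<in> S1"
  unfolding S1_def by auto

lemma sym_rank1: assumes a: "a * a = 1" and xyz: "x \<in> S1" "y \<in> S1" "z \<in> S1"
  and s: "is_sym (a *\<^sub>R outer3 x y z)"
  shows "\<exists>v. v \<in> S1 \<and> a *\<^sub>R outer3 x y z = outer3 v v v"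
proof -
  have an: "a \<noteq> 0" using a by auto
  have e1: "\<And>k. a * (x$1 * y$2 * z$k) = a * (x$2 * y$1 * z$k)"
    using s unfolding is_sym_def outer3_def by simp
  have e2: "\<And>i. a * (x$i * y$1 * z$2) = a * (x$i * y$2 * z$1)"
    using s unfolding is_sym_def outer3_def by simp
  have xy: "x$1 * y$2 = x$2 * y$1"
    using nz_coord[OF xyz(3)] e1[of 1] e1[of 2] an by auto
  have yz: "y$1 * z$2 = y$2 * z$1"
  proof -
    have "\<And>i. x$i * (y$1 * z$2) = x$i * (y$2 * z$1)" using e2 an by (simp add: mult.assoc)
    thus ?thesis using nz_coord[OF xyz(1)] by (metis mult_left_cancel)
  qed
  have pxy: "x = y \<or> x = -y" by (rule par) (use xyz xy in \<open>auto simp: S1_iff\<close>)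
  have pyz: "y = z \<or> y = -z" by (rule par) (use xyz yz in \<open>auto simp: S1_iff\<close>)
  obtain s where ss: "s = 1 \<or> s = -1" and Bs: "a *\<^sub>R outer3 x y z = s *\<^sub>R outer3 z z z"
  proof -
    have "(a *\<^sub>R outer3 x y z = a *\<^sub>R outer3 z z z) \<or> (a *\<^sub>R outer3 x y z = (-a) *\<^sub>R outer3 z z z)"
      using pxy pyz
    proof (elim disjE)
      assume "x = y" "y = z" thus ?thesis by simp
    next
      assume "x = -y" "y = z" thus ?thesis by (simp add: outer3_def vec_eq_iff)
    next
      assume "x = y" "y = -z" thus ?thesis by (simp add: outer3_def vec_eq_iff)
    next
      assume "x = -y" "y = -z" thus ?thesis by (simp add: outer3_def vec_eq_iff)
    qed
    moreover have "a = 1 \<or> a = -1" using pm1 a by blast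
    ultimately show ?thesis using that by (metis minus_minus)
  qed
  show ?thesis using outer3_s[OF ss, of z] Bs S1_scale[OF ss xyz(3)] by metis
qed

lemma cube_iff: assumes "v \<in> S1"
  shows "Fv (T_theta \<theta>) v v v = 1 \<longleftrightarrow> (cx v)^3 = cis \<theta>"
proof -
  have c1: "cis \<theta> * cnj (cis \<theta>) = 1" by (simp add: cnj_self1)
  have "Fv (T_theta \<theta>) v v v = 1 \<longleftrightarrow> cnj (cis \<theta>) * (cx v)^3 = 1"
    using FT_one[OF assms assms assms, of \<theta>] by (simp add: power3_eq_cube mult.assoc)
  also have "\<dots> \<longleftrightarrow> (cx v)^3 = cis \<theta>"
  proof
    assume "cnj (cis \<theta>) * (cx v)^3 = 1"
    hence "cis \<theta> * (cnj (cis \<theta>) * (cx v)^3) = cis \<theta>" by simp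
    thus "(cx v)^3 = cis \<theta>" using c1 by (simp add: mult.assoc[symmetric])
  next
    assume "(cx v)^3 = cis \<theta>"
    thus "cnj (cis \<theta>) * (cx v)^3 = 1" using c1 by (simp add: mult.commute)
  qed
  finally show ?thesis .
qed

lemma root_norm: "(z::complex)^3 = cis \<theta> \<Longrightarrow> cmod z = 1"
proof -
  assume "z^3 = cis \<theta>"
  hence "cmod z ^ 3 = 1 ^ 3" by (metis norm_power norm_cis power_one)
  thus ?thesis using power_eq_iff_eq_base[of 3 "cmod z" 1] by simp
qed

lemma part2b: "card {B. is_best_rank_one (T_theta \<theta>) B \<and> is_sym B} = 3"
proof -
  define f where "f = (\<lambda>z. outer3 (vc z) (vc z) (vc z))"
  have seteq: "{B. is_best_rank_one (T_theta \<theta>) B \<and> is_sym B} = f ` {z. z^3 = cis \<theta>}"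
  proof (intro set_eqI iffI)
    fix B assume "B \<in> {B. is_best_rank_one (T_theta \<theta>) B \<and> is_sym B}"
    hence bB: "is_best_rank_one (T_theta \<theta>) B" and sB: "is_sym B" by auto
    obtain x y z where xyz: "x\<in>S1" "y\<in>S1" "z\<in>S1" and B: "B = Fv (T_theta \<theta>) x y z *\<^sub>R outer3 x y z"
      and a: "\<bar>Fv (T_theta \<theta>) x y z\<bar> = 1" and t: "tinner (T_theta \<theta>) B = 1"
      using best_T[OF bB] by blast
    have aa: "Fv (T_theta \<theta>) x y z * Fv (T_theta \<theta>) x y z = 1" using a by (metis abs_mult_self_eq mult_1)
    obtain v where v: "v \<in> S1" "B = outer3 v v v"
      using sym_rank1[OF aa xyz] sB B by metis
    have "Fv (T_theta \<theta>) v v v = 1" using t v unfolding Fv_def by simp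
    hence "(cx v)^3 = cis \<theta>" using cube_iff[OF v(1)] by simp
    moreover have "B = f (cx v)" using v f_def by simp
    ultimately show "B \<in> f ` {z. z^3 = cis \<theta>}" by blast
  next
    fix B assume "B \<in> f ` {z. z^3 = cis \<theta>}"
    then obtain z where z: "z^3 = cis \<theta>" and B: "B = f z" by blast
    define v where "v = vc z"
    have v: "v \<in> S1" using root_norm[OF z] unfolding v_def S1_cx by simp
    have "Fv (T_theta \<theta>) v v v = 1" using cube_iff[OF v] z v_def by simp
    hence "is_best_rank_one (T_theta \<theta>) B" using FT_one_best[OF v v v] B f_def v_def by simp
    moreover have "is_sym B" using sym_par[of v v v 1] B f_def v_def by simp
    ultimately show "B \<in> {B. is_best_rank_one (T_theta \<theta>) B \<and> is_sym B}" by simp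
  qed
  have inj: "inj_on f {z. z^3 = cis \<theta>}"
  proof (rule inj_onI)
    fix a b assume "f a = f b"
    hence e: "(f a)$1$1$1 = (f b)$1$1$1" "(f a)$2$2$2 = (f b)$2$2$2" by simp_all
    hence "(Re a)^3 = (Re b)^3" "(Im a)^3 = (Im b)^3"
      unfolding f_def outer3_def vc_def by (simp_all add: power3_eq_cube)
    hence "Re a = Re b" "Im a = Im b" by (metis odd_real_root_power_cancel odd_numeral)+
    thus "a = b" by (simp add: complex_eq_iff)
  qed
  have "card {z::complex. z^3 = cis \<theta>} = 3" by (rule card_nth_roots) auto
  thus ?thesis unfolding seteq using card_image[OF inj] by simp
qed


theorem theorem4p1:
  fixes T :: tensor3
  assumes "is_sym T"
    and "\<exists>B. is_best_rank_one T B \<and> \<not> is_sym B"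
  shows "(\<exists>c \<theta>. c \<noteq> 0 \<and> 0 \<le> \<theta> \<and> \<theta> < 2 * pi \<and> T = c *\<^sub>R T_theta \<theta>)
    \<and> (\<forall>\<theta>. (\<forall>u v. u \<in> S1 \<and> v \<in> S1 \<longrightarrow>
                 (\<exists>!w. w \<in> S1 \<and> is_best_rank_one (T_theta \<theta>) (outer3 u v w)))
          \<and> card {B. is_best_rank_one (T_theta \<theta>) B \<and> is_sym B} = 3)"
  using part1[OF assms(1)] assms(2) part2a part2b by blast

end
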